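(* Let $b\ge2$, $\alpha_1,\alpha_2>0$, and let $y\in[0,1)$ be a $b$-adic rational number. Then the scaling function of the pair $(L_{\alpha_1}^b,L_{\alpha_2}^{b,y})$, based on second-order oscillations, is $$\zeta(r_1,r_2)=\begin{cases}\alpha_1r_1+\alpha_2r_2, & \text{if } 1-\alpha_1r_1-\alpha_2r_2\ge0,\\ 1, & \text{if } 1-\alpha_1r_1-\alpha_2r_2<0.\end{cases}$$
   Context: The saw-tooth function is $\{x\}=x-\lfloor x\rfloor-\frac12$ if $x\notin\mathbb{Z}$ and $\{x\}=0$ if $x\in\mathbb{Z}$. For $\alpha>0$ the Lévy function is $L_\alpha^b(x)=\sum_{i\geq1}\{b^ix\}\,b^{-\alpha i}$ and $L_\alpha^{b,y}(x)=L_\alpha^b(x-y)$. $b$-adic grid: $\lambda=\lambda(j,k)=[kb^{-j},(k+1)b^{-j})$, $3\lambda=[(k-1)b^{-j},(k+2)b^{-j})$, $\Lambda_j$ the set of the $b^j$ such intervals contained in $[0,1)$. Second-order difference $\Delta_f^2(x,h)=f(x+2h)-2f(x+h)+f(x)$; oscillation $d_\lambda(f)=\sup\{|\Delta_f^2(x,h)|: x,x+2h\in3\lambda\}$; $d_\lambda^{(1)}=d_\lambda(L_{\alpha_1}^b)$, $d_\lambda^{(2)}=d_\lambda(L_{\alpha_2}^{b,y})$. Structure function $S(r,j)=b^{-j}\sum_{\lambda\in\Lambda_j}(d_\lambda^{(1)})^{r_1}(d_\lambda^{(2)})^{r_2}$, scaling function $\zeta(r)=\liminf_{j\to\infty}\frac{\log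 S(r,j)}{\log b^{-j}}$. *)

theory Defs
  imports "HOL-Analysis.Analysis" "HOL-Library.Liminf_Limsup"
begin

definition sawtooth :: "real \<Rightarrow> real" where
  "sawtooth x = (if x \<in> \<int> then 0 else x - of_int \<lfloor>x\<rfloor> - 1/2)"

definition levy :: "nat \<Rightarrow> real \<Rightarrow> real \<Rightarrow> real" where
  "levy b \<alpha> x = (\<Sum>i. sawtooth (real b ^ (Suc i) * x) * real b powr (- \<alpha> * real (Suc i)))"

definition levy_shift :: "nat \<Rightarrow> real \<Rightarrow> real \<Rightarrow> real \<Rightarrow> real" where
  "levy_shift b \<alpha> y x = levy b \<alpha> (x - y)"

definition Delta2 :: "(real \<Rightarrow> real) \<Rightarrow> real \<Rightarrow> real \<Rightarrow> real" where
  "Delta2 f x h = f (x + 2*h) - 2 * f (x + h) + f x"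

definition three_lambda :: "nat \<Rightarrow> nat \<Rightarrow> nat \<Rightarrow> real set" where
  "three_lambda b j k = {(real k - 1) / real b ^ j ..< (real k + 2) / real b ^ j}"

definition osc2 :: "(real \<Rightarrow> real) \<Rightarrow> nat \<Rightarrow> nat \<Rightarrow> nat \<Rightarrow> real" where
  "osc2 f b j k = Sup {\<bar>Delta2 f x h\<bar> | x h. x \<in> three_lambda b j k \<and> x + 2*h \<in> three_lambda b j k}"

text \<open>Structure function S(r,j); Lambda_j is indexed by k < b^j.\<close>
definition structure_fun :: "nat \<Rightarrow> real \<Rightarrow> real \<Rightarrow> real \<Rightarrow> real \<Rightarrow> real \<Rightarrow> nat \<Rightarrow> real" where
  "structure_fun b \<alpha>1 \<alpha>2 y r1 r2 j =
     real b powr (- real j) *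
     (\<Sum>k<b ^ j. osc2 (levy b \<alpha>1) b j k powr r1 * osc2 (levy_shift b \<alpha>2 y) b j k powr r2)"

definition scaling_fun :: "nat \<Rightarrow> real \<Rightarrow> real \<Rightarrow> real \<Rightarrow> real \<Rightarrow> real \<Rightarrow> ereal" where
  "scaling_fun b \<alpha>1 \<alpha>2 y r1 r2 =
     liminf (\<lambda>j. ereal (ln (structure_fun b \<alpha>1 \<alpha>2 y r1 r2 j) / ln (real b powr (- real j))))"

end

theory Submission
  imports Defs "HOL-Real_Asymp.Real_Asymp"
begin


lemma saw_bound: "\<bar>sawtooth x\<bar> \<le> 1/2"
proof -
  have "x - 1 < of_int \<lfloor>x\<rfloor>" "of_int \<lfloor>x\<rfloor> \<le> x" by linarith+
  then have "\<bar>x - of_int \<lfloor>x\<rfloor> - 1/2\<bar> \<le> 1/2" unfolding abs_le_iff by linarith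
  then show ?thesis unfolding sawtooth_def by auto
qed

lemma saw_int: "x \<in> \<int> \<Longrightarrow> sawtooth x = 0"
  by (simp add: sawtooth_def)

lemma saw_shift: "sawtooth (of_int w + t) = sawtooth t"
proof -
  have "(of_int w + t \<in> \<int>) = (t \<in> \<int>)"
    by (metis Ints_add Ints_diff Ints_of_int add_diff_cancel_left')
  moreover have "\<lfloor>of_int w + t\<rfloor> = w + \<lfloor>t\<rfloor>" by linarith
  ultimately show ?thesis by (simp add: sawtooth_def)
qed

lemma saw_noint: "of_int m < x \<Longrightarrow> x < of_int m + 1 \<Longrightarrow> sawtooth x = x - of_int m - 1/2"
proof -
  assume a: "of_int m < x" "x < of_int m + 1"
  have "\<lfloor>x\<rfloor> = m" using a by linarith
  moreover have "x \<notin> \<int>"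
  proof
    assume "x \<in> \<int>" then obtain n where "x = of_int n" by (auto elim: Ints_cases)
    with a show False by simp
  qed
  ultimately show ?thesis by (simp add: sawtooth_def)
qed

lemma saw_half: "sawtooth (real N / 2) = 0"
proof (cases "even N")
  case True then obtain t where "N = 2*t" by auto
  then show ?thesis by (simp add: saw_int)
next
  case False then obtain t where t: "N = 2*t+1" using oddE by blast
  have "real N / 2 = of_int (int t) + 1/2" using t by simp
  moreover have "sawtooth (of_int (int t) + 1/2) = 0"
    using saw_noint[of "int t" "of_int (int t) + 1/2"] by simp
  ultimately show ?thesis by (metis)
qed


definition D2 :: "nat \<Rightarrow> real \<Rightarrow> real \<Rightarrow> nat \<Rightarrow> real" where
  "D2 b x h I = sawtooth (real b ^ I * (x + 2*h)) - 2 * sawtooth (real b ^ I * (x + h)) + sawtooth (real b ^ I * x)"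

lemma q_facts:
  assumes "b \<ge> 2" "\<alpha> > 0"
  shows "0 < real b powr (-\<alpha>)" "real b powr (-\<alpha>) < 1"
proof -
  show "0 < real b powr (-\<alpha>)" using assms by simp
  have "real b powr (-\<alpha>) < real b powr 0"
    using assms by (intro powr_less_mono) auto
  then show "real b powr (-\<alpha>) < 1" using assms by simp
qed

lemma powr_q: assumes "b \<ge> 2"
  shows "real b powr (- \<alpha> * real n) = (real b powr (-\<alpha>)) ^ n"
  using assms by (simp add: powr_realpow[symmetric] powr_powr)

lemma levy_series:
  assumes "b \<ge> 2" "\<alpha> > 0"
  defines "q \<equiv> real b powr (-\<alpha>)"
  shows "summable (\<lambda>i. q ^ Suc i * sawtooth (real b ^ Suc i * x))"
    and "levy b \<alpha> x = (\<Sum>i. q ^ Suc i * sawtooth (real b ^ Suc i * x))"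
proof -
  have q: "0 < q" "q < 1" using q_facts[OF assms(1,2)] q_def by auto
  have "summable (\<lambda>i. q ^ Suc i)" using q by (simp add: summable_geometric)
  then show "summable (\<lambda>i. q ^ Suc i * sawtooth (real b ^ Suc i * x))"
  proof (rule summable_comparison_test')
    fix n
    show "norm (q ^ Suc n * sawtooth (real b ^ Suc n * x)) \<le> q ^ Suc n"
      using saw_bound[of "real b ^ Suc n * x"] q
      by (simp add: abs_mult)
  qed
  show "levy b \<alpha> x = (\<Sum>i. q ^ Suc i * sawtooth (real b ^ Suc i * x))"
  proof -
    have "real b powr (- \<alpha> * real (Suc i)) = q ^ Suc i" for i
      unfolding q_def by (rule powr_q[OF assms(1)])
    then show ?thesis unfolding levy_def by (simp only: mult.commute)
  qed
qed

lemma Delta2_series: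
  assumes "b \<ge> 2" "\<alpha> > 0"
  defines "q \<equiv> real b powr (-\<alpha>)"
  shows "summable (\<lambda>i. q ^ Suc i * D2 b x h (Suc i))"
    and "Delta2 (levy b \<alpha>) x h = (\<Sum>i. q ^ Suc i * D2 b x h (Suc i))"
proof -
  note s1 = levy_series(1)[OF assms(1,2), folded q_def, of "x + 2*h"]
  note s2 = levy_series(1)[OF assms(1,2), folded q_def, of "x + h"]
  note s3 = levy_series(1)[OF assms(1,2), folded q_def, of "x"]
  have eq: "(\<lambda>i. q ^ Suc i * D2 b x h (Suc i)) = (\<lambda>i. (q ^ Suc i * sawtooth (real b ^ Suc i * (x + 2*h))
     - 2 * (q ^ Suc i * sawtooth (real b ^ Suc i * (x + h)))) + q ^ Suc i * sawtooth (real b ^ Suc i * x))"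
    by (simp add: D2_def algebra_simps)
  have s2': "summable (\<lambda>i. 2 * (q ^ Suc i * sawtooth (real b ^ Suc i * (x + h))))"
    using s2 by (rule summable_mult)
  show "summable (\<lambda>i. q ^ Suc i * D2 b x h (Suc i))"
    unfolding eq by (intro summable_add summable_diff s1 s2' s3)
  have "Delta2 (levy b \<alpha>) x h = (\<Sum>i. q ^ Suc i * sawtooth (real b ^ Suc i * (x + 2*h)))
     - 2 * (\<Sum>i. q ^ Suc i * sawtooth (real b ^ Suc i * (x + h))) + (\<Sum>i. q ^ Suc i * sawtooth (real b ^ Suc i * x))"
    unfolding Delta2_def levy_series(2)[OF assms(1,2), folded q_def] ..
  also have "\<dots> = (\<Sum>i. (q ^ Suc i * sawtooth (real b ^ Suc i * (x + 2*h))
     - 2 * (q ^ Suc i * sawtooth (real b ^ Suc i * (x + h)))) + q ^ Suc i * sawtooth (real b ^ Suc i * x))"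
    by (simp only: suminf_mult[OF s2, symmetric] suminf_diff[OF s1 s2'] suminf_add[OF summable_diff[OF s1 s2'] s3])
  finally show "Delta2 (levy b \<alpha>) x h = (\<Sum>i. q ^ Suc i * D2 b x h (Suc i))" unfolding eq .
qed

lemma D2_bound: "\<bar>D2 b x h I\<bar> \<le> 2"
  using saw_bound[of "real b ^ I * (x + 2*h)"] saw_bound[of "real b ^ I * (x + h)"] saw_bound[of "real b ^ I * x"]
  unfolding D2_def by linarith

lemma D2_affine:
  assumes b: "b \<ge> 2" and noint: "\<And>z::int. \<not> (real b ^ I * a \<le> of_int z \<and> of_int z < real b ^ I * c)"
    and x: "x \<in> {a..<c}" "x + 2*h \<in> {a..<c}"
  shows "D2 b x h I = 0"
proof -
  define m where "m = \<lfloor>real b ^ I * a\<rfloor>"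
  have Bp: "real b ^ I > 0" using b by simp
  have m1: "of_int m \<le> real b ^ I * a" unfolding m_def by linarith
  have m2: "real b ^ I * a < of_int m + 1" unfolding m_def by linarith
  have m3: "of_int (m+1) \<ge> real b ^ I * c" using noint[of "m+1"] m2 by auto
  have m4: "of_int m < real b ^ I * a \<or> real b ^ I * c \<le> real b ^ I * a"
    using noint[of m] m1 by auto
  have ac: "a < c" using x by auto
  then have "real b ^ I * a < real b ^ I * c" using Bp by simp
  then have m4': "of_int m < real b ^ I * a" using m4 by auto
  have key: "sawtooth (real b ^ I * u) = real b ^ I * u - of_int m - 1/2" if "u \<in> {a..<c}" for u
  proof (rule saw_noint)
    have "real b ^ I * a \<le> real b ^ I * u" "real b ^ I * u < real b ^ I * c"
      using that Bp by auto
    then show "of_int m < real b ^ I * u" "real b ^ I * u < of_int m + 1" using m4' m3 by auto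
  qed
  have xh: "x + h \<in> {a..<c}" using x by auto
  show ?thesis unfolding D2_def using key[OF x(1)] key[OF x(2)] key[OF xh]
    by (simp add: algebra_simps)
qed


lemma Delta2_upper:
  assumes b: "b \<ge> 2" and a: "\<alpha> > 0"
    and noint: "\<And>I z. I < L \<Longrightarrow> \<not> (real b ^ I * a \<le> of_int z \<and> of_int z < real b ^ I * c)"
    and x: "x \<in> {a..<c}" "x + 2*h \<in> {a..<c}"
  shows "\<bar>Delta2 (levy b \<alpha>) x h\<bar> \<le> 2 / (1 - real b powr (-\<alpha>)) * (real b powr (-\<alpha>)) ^ L"
proof -
  define q where "q = real b powr (-\<alpha>)"
  have q: "0 < q" "q < 1" using q_facts[OF b a] q_def by auto
  define f where "f i = q ^ Suc i * D2 b x h (Suc i)" for i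
  have sf: "summable f" unfolding f_def q_def by (rule Delta2_series(1)[OF b a])
  have eq: "Delta2 (levy b \<alpha>) x h = suminf f" unfolding f_def q_def by (rule Delta2_series(2)[OF b a])
  define k where "k = L - 1"
  have f0: "f i = 0" if "i < k" for i
  proof -
    have "D2 b x h (Suc i) = 0" using that k_def
      by (intro D2_affine[OF b _ x]) (intro noint, simp)
    then show ?thesis unfolding f_def by simp
  qed
  have "suminf f = (\<Sum>n. f (n + k)) + (\<Sum>i<k. f i)" by (rule suminf_split_initial_segment[OF sf])
  also have "(\<Sum>i<k. f i) = 0" using f0 by simp
  finally have s: "suminf f = (\<Sum>n. f (n + k))" by simp
  have sfk: "summable (\<lambda>n. f (n + k))" using sf by (rule summable_ignore_initial_segment)
  define G where "G n = 2 * q ^ Suc k * q ^ n" for n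
  have sG: "summable G" unfolding G_def using q by (intro summable_mult summable_geometric) auto
  have sumG: "suminf G = 2 * q ^ Suc k / (1 - q)"
    unfolding G_def using q by (simp add: suminf_mult suminf_geometric)
  have bnd: "\<bar>f (n + k)\<bar> \<le> G n" for n
  proof -
    have "\<bar>f (n + k)\<bar> = q ^ Suc (n + k) * \<bar>D2 b x h (Suc (n + k))\<bar>"
      unfolding f_def using q by (simp add: abs_mult)
    also have "\<dots> \<le> q ^ Suc (n + k) * 2" using D2_bound q by (intro mult_left_mono) auto
    also have "\<dots> = G n" unfolding G_def by (simp add: power_add algebra_simps)
    finally show ?thesis .
  qed
  have "(\<Sum>n. f (n + k)) \<le> suminf G"
    using bnd by (intro suminf_le[OF _ sfk sG]) (simp add: abs_le_iff)
  moreover have "- suminf G \<le> (\<Sum>n. f (n + k))"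
  proof -
    have "suminf (\<lambda>n. - G n) \<le> (\<Sum>n. f (n + k))"
    proof (intro suminf_le[OF _ summable_minus[OF sG] sfk])
      fix n show "- G n \<le> f (n + k)" using bnd[of n] by linarith
    qed
    then show ?thesis by (simp add: suminf_minus[OF sG])
  qed
  ultimately have "\<bar>Delta2 (levy b \<alpha>) x h\<bar> \<le> 2 * q ^ Suc k / (1 - q)"
    using eq s sumG by linarith
  also have "\<dots> \<le> 2 * q ^ L / (1 - q)"
    using q k_def by (intro divide_right_mono mult_left_mono power_decreasing) auto
  finally show ?thesis unfolding q_def by simp
qed


lemma D2_lower_terms:
  assumes b: "b \<ge> 2"
    and noint: "\<And>I z. I < L \<Longrightarrow> \<not> (real b ^ I * a \<le> of_int z \<and> of_int z < real b ^ I * c)"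
    and p: "p = of_int z / real b ^ L" "p \<in> {a..<c}" "p + 1 / real b ^ n \<in> {a..<c}"
    and n: "L < n"
  shows "D2 b p (1 / (2 * real b ^ n)) I = (if L \<le> I \<and> I < n then 1/2 else 0)"
proof -
  define h where "h = 1 / (2 * real b ^ n)"
  have B: "real b > 1" using b by simp
  have p2h: "p + 2*h \<in> {a..<c}" using p(3) unfolding h_def by simp
  show ?thesis
  proof (cases "I < L")
    case True
    have "D2 b p h I = 0"
      by (rule D2_affine[OF b _ p(2) p2h]) (rule noint[OF True])
    then show ?thesis using True unfolding h_def by simp
  next
    case False
    then have LI: "L \<le> I" by simp
    have pI: "real b ^ I * p = of_int (z * int b ^ (I - L))"
    proof -
      have "real b ^ I = real b ^ (I - L) * real b ^ L" using LI by (simp add: power_add[symmetric])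
      then show ?thesis using p(1) B by simp
    qed
    have s0: "sawtooth (real b ^ I * p) = 0" unfolding pI by (simp add: saw_int)
    show ?thesis
    proof (cases "I < n")
      case True
      define t where "t = 1 / real b ^ (n - I)"
      have t: "0 < t" "t < 1" unfolding t_def using B True by auto
      have e: "real b ^ I * (1 / real b ^ n) = t"
      proof -
        have "real b ^ n = real b ^ (n - I) * real b ^ I" using True by (simp add: power_add[symmetric])
        then show ?thesis unfolding t_def using B by simp
      qed
      have e1: "real b ^ I * (p + 2*h) = of_int (z * int b ^ (I - L)) + t"
        using e pI unfolding h_def by (simp add: algebra_simps)
      have e2: "real b ^ I * (p + h) = of_int (z * int b ^ (I - L)) + t/2"
        using e pI unfolding h_def by (simp add: algebra_simps)
      have "sawtooth t = t - 1/2" using saw_noint[of 0 t] t by simp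
      moreover have "sawtooth (t/2) = t/2 - 1/2" using saw_noint[of 0 "t/2"] t by simp
      ultimately have "D2 b p h I = 1/2"
        unfolding D2_def e1 e2 saw_shift s0 by simp
      then show ?thesis using LI True unfolding h_def by simp
    next
      case False
      have e: "real b ^ I * (1 / real b ^ n) = real (b ^ (I - n))"
      proof -
        have "real b ^ I = real b ^ (I - n) * real b ^ n" using False by (simp add: power_add[symmetric])
        then show ?thesis using B by simp
      qed
      have e1: "real b ^ I * (p + 2*h) = of_int (z * int b ^ (I - L) + int (b ^ (I - n)))"
        using e pI unfolding h_def by (simp add: algebra_simps)
      have e2: "real b ^ I * (p + h) = of_int (z * int b ^ (I - L)) + real (b ^ (I - n)) / 2"
        using e pI unfolding h_def by (simp add: algebra_simps)
      have "D2 b p h I = 0"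
        unfolding D2_def e1 e2 saw_shift s0 saw_half by (simp add: saw_int)
      then show ?thesis using False unfolding h_def by simp
    qed
  qed
qed

lemma Delta2_lower:
  assumes b: "b \<ge> 2" and a: "\<alpha> > 0"
    and noint: "\<And>I z. I < L \<Longrightarrow> \<not> (real b ^ I * a \<le> of_int z \<and> of_int z < real b ^ I * c)"
    and p: "p = of_int z / real b ^ L" "p \<in> {a..<c}"
  shows "\<exists>x h. x \<in> {a..<c} \<and> x + 2*h \<in> {a..<c} \<and>
     (real b powr (-\<alpha>)) ^ Suc L / 2 \<le> \<bar>Delta2 (levy b \<alpha>) x h\<bar>"
proof -
  define q where "q = real b powr (-\<alpha>)"
  have q: "0 < q" "q < 1" using q_facts[OF b a] q_def by auto
  have B: "real b > 1" using b by simp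
  have "c - p > 0" using p by auto
  then obtain n0 where n0: "(1 / real b) ^ n0 < c - p"
    using real_arch_pow_inv[of "c - p" "1 / real b"] B by auto
  define n where "n = n0 + L + 2"
  have "(1 / real b) ^ n \<le> (1 / real b) ^ n0"
    unfolding n_def using B by (intro power_decreasing) auto
  then have "1 / real b ^ n < c - p" using n0 by (simp add: power_one_over)
  moreover have "0 \<le> 1 / real b ^ n" by simp
  ultimately have pn: "p + 1 / real b ^ n \<in> {a..<c}" using p(2) unfolding atLeastLessThan_iff by linarith
  have Ln: "L < n" unfolding n_def by simp
  define h where "h = 1 / (2 * real b ^ n)"
  have p2h: "p + 2 * h \<in> {a..<c}" using pn unfolding h_def by simp
  define f where "f i = q ^ Suc i * D2 b p h (Suc i)" for i
  have sf: "summable f" unfolding f_def q_def by (rule Delta2_series(1)[OF b a])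
  have eq: "Delta2 (levy b \<alpha>) p h = suminf f" unfolding f_def q_def by (rule Delta2_series(2)[OF b a])
  have fv: "f i = q ^ Suc i * (if L \<le> Suc i \<and> Suc i < n then 1/2 else 0)" for i
    unfolding f_def h_def using D2_lower_terms[OF b noint p pn Ln] by simp
  have "sum f {L} \<le> suminf f"
    by (rule sum_le_suminf[OF sf]) (use q fv in auto)
  moreover have "f L = q ^ Suc L / 2" using fv Ln unfolding n_def by simp
  ultimately have "q ^ Suc L / 2 \<le> \<bar>Delta2 (levy b \<alpha>) p h\<bar>" using eq by simp
  then show ?thesis using p(2) p2h unfolding q_def by blast
qed


definition Pint :: "nat \<Rightarrow> real \<Rightarrow> nat \<Rightarrow> nat \<Rightarrow> nat \<Rightarrow> bool" where
  "Pint b y j k I \<longleftrightarrow> (\<exists>z::int. real b ^ I * ((real k - 1) / real b ^ j - y) \<le> of_int z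
      \<and> of_int z < real b ^ I * ((real k + 2) / real b ^ j - y))"

definition lev :: "nat \<Rightarrow> real \<Rightarrow> nat \<Rightarrow> nat \<Rightarrow> nat" where
  "lev b y j k = (LEAST I. Pint b y j k I)"

lemma Pint_j: assumes "b \<ge> 2" shows "Pint b y j k j"
proof -
  have B: "real b ^ j > 0" using assms by simp
  define u where "u = real b ^ j * ((real k - 1) / real b ^ j - y)"
  have e1: "real b ^ j * ((real k + 2) / real b ^ j - y) = real k + 2 - real b ^ j * y"
    using B by (simp add: field_simps)
  have e2: "real b ^ j * ((real k - 1) / real b ^ j - y) = real k - 1 - real b ^ j * y"
    using B by (simp add: field_simps)
  have u2: "real b ^ j * ((real k + 2) / real b ^ j - y) = u + 3"
    unfolding u_def e1 e2 by simp
  show ?thesis unfolding Pint_def u2 u_def[symmetric]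
    by (rule exI[of _ "\<lceil>u\<rceil>"]) linarith
qed

lemma lev_props: assumes "b \<ge> 2"
  shows "Pint b y j k (lev b y j k)" "lev b y j k \<le> j" "\<And>I. I < lev b y j k \<Longrightarrow> \<not> Pint b y j k I"
  unfolding lev_def using Pint_j[OF assms]
  by (auto intro: LeastI Least_le dest: not_less_Least)

lemma osc_bounds:
  assumes b: "b \<ge> 2" and a: "\<alpha> > 0"
  defines "q \<equiv> real b powr (-\<alpha>)"
  shows "q ^ Suc (lev b y j k) / 2 \<le> osc2 (levy_shift b \<alpha> y) b j k"
    and "osc2 (levy_shift b \<alpha> y) b j k \<le> 2 / (1 - q) * q ^ lev b y j k"
proof -
  define L where "L = lev b y j k"
  define a where "a = (real k - 1) / real b ^ j - y"
  define c where "c = (real k + 2) / real b ^ j - y"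
  have Bp: "real b ^ L > 0" using b by simp
  have tl: "x \<in> three_lambda b j k \<longleftrightarrow> x - y \<in> {a..<c}" for x
    unfolding three_lambda_def a_def c_def by auto
  have d: "Delta2 (levy_shift b \<alpha> y) x h = Delta2 (levy b \<alpha>) (x - y) h" for x h
    unfolding Delta2_def levy_shift_def by (simp add: algebra_simps)
  define S where "S = {\<bar>Delta2 (levy_shift b \<alpha> y) x h\<bar> | x h. x \<in> three_lambda b j k \<and> x + 2*h \<in> three_lambda b j k}"
  have osc: "osc2 (levy_shift b \<alpha> y) b j k = Sup S" unfolding osc2_def S_def ..
  have noint: "\<not> (real b ^ I * a \<le> of_int z \<and> of_int z < real b ^ I * c)" if "I < L" for I z
    using lev_props(3)[OF b that[unfolded L_def]] unfolding Pint_def a_def c_def by auto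
  have ub: "s \<le> 2 / (1 - q) * q ^ L" if "s \<in> S" for s
  proof -
    obtain x h where s: "s = \<bar>Delta2 (levy_shift b \<alpha> y) x h\<bar>" "x \<in> three_lambda b j k" "x + 2*h \<in> three_lambda b j k"
      using \<open>s \<in> S\<close> unfolding S_def by blast
    have "x - y \<in> {a..<c}" "x - y + 2*h \<in> {a..<c}" using s(2,3) tl[of x] tl[of "x+2*h"]
      by (auto simp: algebra_simps)
    from Delta2_upper[OF b a noint this] show ?thesis unfolding s(1) d q_def by simp
  qed
  have ne: "S \<noteq> {}"
  proof -
    have "(real k) / real b ^ j \<in> three_lambda b j k" unfolding three_lambda_def
      using b by (auto simp: divide_simps)
    then have "\<bar>Delta2 (levy_shift b \<alpha> y) (real k / real b ^ j) 0\<bar> \<in> S" unfolding S_def by force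
    then show ?thesis by auto
  qed
  show "osc2 (levy_shift b \<alpha> y) b j k \<le> 2 / (1 - q) * q ^ lev b y j k"
    unfolding osc L_def[symmetric] using ne ub by (intro cSup_least) auto
  obtain z where z: "real b ^ L * a \<le> of_int z" "of_int z < real b ^ L * c"
    using lev_props(1)[OF b, of y j k] unfolding L_def[symmetric] Pint_def a_def c_def by auto
  define p where "p = of_int z / real b ^ L"
  have pin: "p \<in> {a..<c}" unfolding p_def using z Bp by (auto simp: field_simps)
  obtain x h where xh: "x \<in> {a..<c}" "x + 2*h \<in> {a..<c}" "q ^ Suc L / 2 \<le> \<bar>Delta2 (levy b \<alpha>) x h\<bar>"
    using Delta2_lower[OF b a noint p_def pin] unfolding q_def by blast
  have mem: "\<bar>Delta2 (levy b \<alpha>) x h\<bar> \<in> S"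
  proof -
    have "x + y \<in> three_lambda b j k" "x + y + 2*h \<in> three_lambda b j k"
      using xh(1,2) tl[of "x+y"] tl[of "x+y+2*h"] by (auto simp: algebra_simps)
    moreover have "Delta2 (levy b \<alpha>) x h = Delta2 (levy_shift b \<alpha> y) (x + y) h" using d by simp
    ultimately show ?thesis unfolding S_def mem_Collect_eq
      by (intro exI[of _ "x+y"] exI[of _ h]) simp
  qed
  have bdd: "bdd_above S" unfolding bdd_above_def using ub by blast
  show "q ^ Suc (lev b y j k) / 2 \<le> osc2 (levy_shift b \<alpha> y) b j k"
    unfolding osc L_def[symmetric] using xh(3) mem bdd by (intro cSup_upper2) auto
qed

lemma levy_shift0: "levy_shift b \<alpha> 0 = levy b \<alpha>"
  by (rule ext) (simp add: levy_shift_def)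


lemma Pint_mono: assumes "b \<ge> 2" "Pint b y j k I" "I \<le> I'" shows "Pint b y j k I'"
proof -
  obtain d where d: "I' = I + d" using assms(3) le_Suc_ex by blast
  obtain z::int where z: "real b ^ I * ((real k - 1) / real b ^ j - y) \<le> of_int z"
      "of_int z < real b ^ I * ((real k + 2) / real b ^ j - y)"
    using assms(2) unfolding Pint_def by blast
  have Bd: "real b ^ d > 0" using assms(1) by simp
  have "real b ^ d * (real b ^ I * ((real k - 1) / real b ^ j - y)) \<le> real b ^ d * of_int z"
       "real b ^ d * of_int z < real b ^ d * (real b ^ I * ((real k + 2) / real b ^ j - y))"
    using z Bd by (auto intro: mult_left_mono)
  then show ?thesis unfolding Pint_def d
    by (intro exI[of _ "int b ^ d * z"]) (simp add: power_add algebra_simps)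
qed

lemma Pint_shift:
  assumes b: "b \<ge> 2" and y: "y = real k0 / real b ^ m" and I: "m \<le> I"
  shows "Pint b y j k I \<longleftrightarrow> Pint b 0 j k I"
proof -
  define w where "w = int k0 * int b ^ (I - m)"
  have "real b ^ I = real b ^ (I - m) * real b ^ m" using I by (simp add: power_add[symmetric])
  then have wy: "real b ^ I * y = of_int w" unfolding w_def y using b by simp
  have e: "real b ^ I * (A - y) = real b ^ I * (A - 0) - of_int w" for A
    using wy by (simp add: algebra_simps)
  show ?thesis
  proof
    assume "Pint b y j k I"
    then obtain z::int where "real b ^ I * ((real k - 1) / real b ^ j - y) \<le> of_int z"
      "of_int z < real b ^ I * ((real k + 2) / real b ^ j - y)" unfolding Pint_def by blast
    then show "Pint b 0 j k I" unfolding Pint_def e by (intro exI[of _ "z + w"]) simp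
  next
    assume "Pint b 0 j k I"
    then obtain z::int where "real b ^ I * ((real k - 1) / real b ^ j - 0) \<le> of_int z"
      "of_int z < real b ^ I * ((real k + 2) / real b ^ j - 0)" unfolding Pint_def by blast
    then show "Pint b y j k I" unfolding Pint_def e by (intro exI[of _ "z - w"]) simp
  qed
qed

lemma lev_shift_le:
  assumes b: "b \<ge> 2" and y: "y = real k0 / real b ^ m"
  shows "lev b 0 j k \<le> lev b y j k + m" "lev b y j k \<le> lev b 0 j k + m"
proof -
  have "Pint b y j k (lev b y j k + m)" by (rule Pint_mono[OF b lev_props(1)[OF b]]) simp
  then have "Pint b 0 j k (lev b y j k + m)" using Pint_shift[OF b y] by simp
  then show "lev b 0 j k \<le> lev b y j k + m" unfolding lev_def by (rule Least_le)
  have "Pint b 0 j k (lev b 0 j k + m)" by (rule Pint_mono[OF b lev_props(1)[OF b]]) simp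
  then have "Pint b y j k (lev b 0 j k + m)" using Pint_shift[OF b y] by simp
  then show "lev b y j k \<le> lev b 0 j k + m" unfolding lev_def by (rule Least_le)
qed

lemma powr_sandwich:
  fixes c C u d r :: real
  assumes "0 < c" "c * u \<le> d" "d \<le> C * u" "0 < u"
  shows "min (c powr r) (C powr r) * u powr r \<le> d powr r"
    and "d powr r \<le> max (c powr r) (C powr r) * u powr r"
proof -
  define e where "e = d / u"
  have d: "d = e * u" unfolding e_def using assms by simp
  have e: "c \<le> e" "e \<le> C" using assms unfolding d by auto
  have ep: "0 < e" using e assms by linarith
  have pr: "d powr r = e powr r * u powr r" unfolding d using ep assms by (simp add: powr_mult)
  have up: "u powr r > 0" using assms by simp
  have "min (c powr r) (C powr r) \<le> e powr r \<and> e powr r \<le> max (c powr r) (C powr r)"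
  proof (cases "r \<ge> 0")
    case True
    have "c powr r \<le> e powr r" "e powr r \<le> C powr r"
      using e assms ep True by (auto intro: powr_mono2)
    then show ?thesis by linarith
  next
    case False
    then have "r \<le> 0" by simp
    have "c powr r \<ge> e powr r" "e powr r \<ge> C powr r"
      using e assms ep \<open>r \<le> 0\<close> by (auto intro: powr_mono2')
    then show ?thesis by linarith
  qed
  then show "min (c powr r) (C powr r) * u powr r \<le> d powr r"
    and "d powr r \<le> max (c powr r) (C powr r) * u powr r"
    unfolding pr using up by (auto intro: mult_right_mono)
qed


lemma term_bounds:
  assumes b: "b \<ge> 2" and a1: "\<alpha>1 > 0" and a2: "\<alpha>2 > 0" and y: "y = real k0 / real b ^ m"
  shows "\<exists>\<kappa> K. \<kappa> > 0 \<and> (\<forall>j k.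
     \<kappa> * real b powr (- (\<alpha>1 * r1 + \<alpha>2 * r2) * real (lev b 0 j k))
       \<le> osc2 (levy b \<alpha>1) b j k powr r1 * osc2 (levy_shift b \<alpha>2 y) b j k powr r2
     \<and> osc2 (levy b \<alpha>1) b j k powr r1 * osc2 (levy_shift b \<alpha>2 y) b j k powr r2
       \<le> K * real b powr (- (\<alpha>1 * r1 + \<alpha>2 * r2) * real (lev b 0 j k)))"
proof -
  define B where "B = real b"
  have B1: "B > 1" using b unfolding B_def by simp
  define \<beta> where "\<beta> = \<alpha>1 * r1 + \<alpha>2 * r2"
  define q1 where "q1 = B powr (-\<alpha>1)"
  define q2 where "q2 = B powr (-\<alpha>2)"
  have q1: "0 < q1" "q1 < 1" using q_facts[OF b a1] q1_def B_def by auto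
  have q2: "0 < q2" "q2 < 1" using q_facts[OF b a2] q2_def B_def by auto
  define c1 where "c1 = q1 / 2"
  define c2 where "c2 = q2 / 2"
  define C1 where "C1 = 2 / (1 - q1)"
  define C2 where "C2 = 2 / (1 - q2)"
  define mn1 where "mn1 = min (c1 powr r1) (C1 powr r1)"
  define mn2 where "mn2 = min (c2 powr r2) (C2 powr r2)"
  define mx1 where "mx1 = max (c1 powr r1) (C1 powr r1)"
  define mx2 where "mx2 = max (c2 powr r2) (C2 powr r2)"
  define W where "W = B powr (\<bar>\<alpha>2 * r2\<bar> * real m)"
  have c1p: "c1 > 0" "C1 > 0" using q1 unfolding c1_def C1_def by auto
  have c2p: "c2 > 0" "C2 > 0" using q2 unfolding c2_def C2_def by auto
  have mn1p: "mn1 > 0" unfolding mn1_def using c1p by simp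
  have mn2p: "mn2 > 0" unfolding mn2_def using c2p by simp
  have Wp: "W > 0" unfolding W_def using B1 by simp
  have mx1p: "mx1 \<ge> 0" "mx2 \<ge> 0" unfolding mx1_def mx2_def by (simp_all add: le_max_iff_disj)
  define \<kappa> where "\<kappa> = mn1 * mn2 / W"
  define K where "K = mx1 * mx2 * W"
  have "\<forall>j k.
     \<kappa> * B powr (- \<beta> * real (lev b 0 j k))
       \<le> osc2 (levy b \<alpha>1) b j k powr r1 * osc2 (levy_shift b \<alpha>2 y) b j k powr r2
     \<and> osc2 (levy b \<alpha>1) b j k powr r1 * osc2 (levy_shift b \<alpha>2 y) b j k powr r2
       \<le> K * B powr (- \<beta> * real (lev b 0 j k))"
  proof (intro allI)
    fix j k
    define L1 where "L1 = lev b 0 j k"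
    define L2 where "L2 = lev b y j k"
    define d1 where "d1 = osc2 (levy b \<alpha>1) b j k"
    define d2 where "d2 = osc2 (levy_shift b \<alpha>2 y) b j k"
    define u1 where "u1 = q1 ^ L1"
    define u2 where "u2 = q2 ^ L2"
    have u1p: "u1 > 0" "u2 > 0" unfolding u1_def u2_def using q1 q2 by auto
    have d1b: "c1 * u1 \<le> d1" "d1 \<le> C1 * u1"
      using osc_bounds[OF b a1, of 0 j k] unfolding levy_shift0 d1_def c1_def C1_def u1_def L1_def q1_def B_def
      by (auto simp: field_simps)
    have d2b: "c2 * u2 \<le> d2" "d2 \<le> C2 * u2"
      using osc_bounds[OF b a2, of y j k] unfolding d2_def c2_def C2_def u2_def L2_def q2_def B_def
      by (auto simp: field_simps)
    note s1 = powr_sandwich[OF c1p(1) d1b u1p(1), of r1, folded mn1_def mx1_def]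
    note s2 = powr_sandwich[OF c2p(1) d2b u1p(2), of r2, folded mn2_def mx2_def]
    have eu1: "u1 powr r1 = B powr (- \<alpha>1 * r1 * real L1)"
      unfolding u1_def q1_def using B1
      by (simp add: powr_realpow[symmetric] powr_powr mult.commute mult.left_commute)
    have eu2: "u2 powr r2 = B powr (- \<alpha>2 * r2 * real L2)"
      unfolding u2_def q2_def using B1
      by (simp add: powr_realpow[symmetric] powr_powr mult.commute mult.left_commute)
    define V where "V = B powr (\<alpha>2 * r2 * (real L1 - real L2))"
    have prod: "u1 powr r1 * u2 powr r2 = B powr (- \<beta> * real L1) * V"
      unfolding eu1 eu2 V_def \<beta>_def by (simp add: powr_add[symmetric] algebra_simps)
    have Ldiff: "\<bar>real L1 - real L2\<bar> \<le> real m"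
      using lev_shift_le[OF b y, of j k] unfolding L1_def L2_def by linarith
    have ex: "\<bar>\<alpha>2 * r2 * (real L1 - real L2)\<bar> \<le> \<bar>\<alpha>2 * r2\<bar> * real m"
      unfolding abs_mult[of "\<alpha>2 * r2"] using Ldiff by (intro mult_left_mono) auto
    have V1: "V \<le> W" unfolding V_def W_def using B1 ex by (intro powr_mono) auto
    have V2: "1 / W \<le> V"
    proof -
      have "B powr (- (\<bar>\<alpha>2 * r2\<bar> * real m)) \<le> V" unfolding V_def using B1 ex by (intro powr_mono) auto
      then show ?thesis unfolding W_def by (simp add: powr_minus divide_inverse)
    qed
    have Pp: "B powr (- \<beta> * real L1) > 0" using B1 by simp
    have dp1: "d1 powr r1 \<ge> 0" "d2 powr r2 \<ge> 0" by auto
    have up: "u1 powr r1 \<ge> 0" "u2 powr r2 \<ge> 0" by auto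
    have "\<kappa> * B powr (- \<beta> * real L1) = mn1 * mn2 * (B powr (- \<beta> * real L1) * (1 / W))"
      unfolding \<kappa>_def by simp
    also have "\<dots> \<le> mn1 * mn2 * (B powr (- \<beta> * real L1) * V)"
      using V2 Pp mn1p mn2p by (intro mult_left_mono) auto
    also have "\<dots> = (mn1 * u1 powr r1) * (mn2 * u2 powr r2)" unfolding prod[symmetric] by simp
    also have "\<dots> \<le> d1 powr r1 * d2 powr r2"
      using s1(1) s2(1) mn1p mn2p up by (intro mult_mono) auto
    finally have lo: "\<kappa> * B powr (- \<beta> * real L1) \<le> d1 powr r1 * d2 powr r2" .
    have "d1 powr r1 * d2 powr r2 \<le> (mx1 * u1 powr r1) * (mx2 * u2 powr r2)"
      using s1(2) s2(2) dp1 mx1p up by (intro mult_mono) auto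
    also have "\<dots> = mx1 * mx2 * (B powr (- \<beta> * real L1) * V)" unfolding prod[symmetric] by simp
    also have "\<dots> \<le> mx1 * mx2 * (B powr (- \<beta> * real L1) * W)"
      using V1 Pp mx1p by (intro mult_left_mono) auto
    also have "\<dots> = K * B powr (- \<beta> * real L1)" unfolding K_def by simp
    finally have hi: "d1 powr r1 * d2 powr r2 \<le> K * B powr (- \<beta> * real L1)" .
    show "\<kappa> * B powr (- \<beta> * real (lev b 0 j k))
       \<le> osc2 (levy b \<alpha>1) b j k powr r1 * osc2 (levy_shift b \<alpha>2 y) b j k powr r2
     \<and> osc2 (levy b \<alpha>1) b j k powr r1 * osc2 (levy_shift b \<alpha>2 y) b j k powr r2
       \<le> K * B powr (- \<beta> * real (lev b 0 j k))"
      using lo hi unfolding d1_def d2_def L1_def by simp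
  qed
  moreover have "\<kappa> > 0" unfolding \<kappa>_def using mn1p mn2p Wp by simp
  ultimately show ?thesis unfolding B_def \<beta>_def by blast
qed


lemma lev_zero: assumes b: "b \<ge> 2" shows "lev b 0 j 0 = 0"
proof -
  have "Pint b 0 j 0 0" unfolding Pint_def using b by (intro exI[of _ 0]) simp
  then show ?thesis unfolding lev_def by simp
qed

lemma T_ge1:
  assumes b: "b \<ge> 2"
  shows "1 \<le> (\<Sum>k<b^j. real b powr (- \<beta> * real (lev b 0 j k)))"
proof -
  have "real b powr (- \<beta> * real (lev b 0 j 0)) \<le> (\<Sum>k<b^j. real b powr (- \<beta> * real (lev b 0 j k)))"
    using b by (intro member_le_sum) auto
  then show ?thesis using lev_zero[OF b] b by simp
qed

lemma cancel_helper: "(x::real) \<noteq> 0 \<Longrightarrow> x * (a / (x * y)) = a / y"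
  by (cases "y = 0") (simp_all add: field_simps)

lemma Pint_int:
  assumes b: "b \<ge> 2" and I: "I \<le> j" and P: "Pint b 0 j k I"
  shows "\<exists>z::int. int k - 1 \<le> z * int b ^ (j - I) \<and> z * int b ^ (j - I) \<le> int k + 1"
proof -
  obtain z::int where z: "real b ^ I * ((real k - 1) / real b ^ j - 0) \<le> of_int z"
      "of_int z < real b ^ I * ((real k + 2) / real b ^ j - 0)" using P unfolding Pint_def by blast
  have Bj: "real b ^ j = real b ^ I * real b ^ (j - I)" using I by (simp add: power_add[symmetric])
  have Bp: "real b ^ I > 0" "real b ^ (j - I) > 0" using b by auto
  have "(real k - 1) \<le> of_int z * real b ^ (j - I)"
  proof -
    have "real b ^ I * ((real k - 1) / real b ^ j - 0) = (real k - 1) / real b ^ (j - I)"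
      using cancel_helper[of "real b ^ I" "real k - 1" "real b ^ (j-I)"] Bp unfolding Bj by simp
    then show ?thesis using z(1) Bp by (simp add: field_simps)
  qed
  moreover have "of_int z * real b ^ (j - I) < real k + 2"
  proof -
    have "real b ^ I * ((real k + 2) / real b ^ j - 0) = (real k + 2) / real b ^ (j - I)"
      using cancel_helper[of "real b ^ I" "real k + 2" "real b ^ (j-I)"] Bp unfolding Bj by simp
    then show ?thesis using z(2) Bp by (simp add: field_simps)
  qed
  ultimately have "of_int (int k - 1) \<le> (of_int (z * int b ^ (j - I)) :: real)"
    "(of_int (z * int b ^ (j - I)) :: real) < of_int (int k + 2)" by simp_all
  then have "int k - 1 \<le> z * int b ^ (j - I)" "z * int b ^ (j - I) < int k + 2"
    by (simp_all only: of_int_le_iff of_int_less_iff)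
  then show ?thesis by auto
qed

lemma lev_big:
  assumes b: "b \<ge> 2" and j: "j \<ge> 2"
  shows "j - 1 \<le> lev b 0 j (b^2 * t + 2)"
proof (rule ccontr)
  define k where "k = b^2 * t + 2"
  assume "\<not> j - 1 \<le> lev b 0 j (b^2 * t + 2)"
  then have l: "lev b 0 j k \<le> j - 2" unfolding k_def by simp
  define I where "I = lev b 0 j k"
  have P: "Pint b 0 j k I" unfolding I_def by (rule lev_props(1)[OF b])
  have Ij: "I \<le> j" "2 \<le> j - I" using l j unfolding I_def by auto
  obtain z::int where z: "int k - 1 \<le> z * int b ^ (j - I)" "z * int b ^ (j - I) \<le> int k + 1"
    using Pint_int[OF b Ij(1) P] by blast
  define w where "w = z * int b ^ (j - I - 2) - int t"
  have e: "z * int b ^ (j - I) = int b ^ 2 * w + int b ^ 2 * int t"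
  proof -
    have "int b ^ (j - I) = int b ^ 2 * int b ^ (j - I - 2)" using Ij(2)
      by (metis power_add le_add_diff_inverse)
    then show ?thesis unfolding w_def by (simp add: algebra_simps)
  qed
  have kk: "int k = int b ^ 2 * int t + 2" unfolding k_def by simp
  have w1: "1 \<le> int b ^ 2 * w" "int b ^ 2 * w \<le> 3" using z unfolding e kk by auto
  have b4: "int b ^ 2 \<ge> 4"
  proof -
    have "int b ^ 2 \<ge> 2 ^ 2" using b by (intro power_mono) auto
    then show ?thesis by simp
  qed
  show False
  proof (cases "w \<ge> 1")
    case True
    then have "int b ^ 2 * w \<ge> int b ^ 2 * 1" using b4 by (intro mult_left_mono) auto
    then show False using w1 b4 by simp
  next
    case False
    then have "w \<le> 0" by simp
    then have "int b ^ 2 * w \<le> 0" using b4 by (simp add: mult_nonneg_nonpos)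
    then show False using w1 by simp
  qed
qed

lemma T_lower:
  assumes b: "b \<ge> 2" and j: "j \<ge> 2"
  shows "real (b ^ (j - 2)) * (min 1 (real b powr \<beta>) * real b powr (- \<beta> * real j))
     \<le> (\<Sum>k<b^j. real b powr (- \<beta> * real (lev b 0 j k)))"
proof -
  define g where "g t = b^2 * t + 2" for t
  define f where "f k = real b powr (- \<beta> * real (lev b 0 j k))" for k
  define c where "c = min 1 (real b powr \<beta>) * real b powr (- \<beta> * real j)"
  have inj: "inj g" unfolding g_def inj_def using b by auto
  have sub: "g ` {..<b^(j-2)} \<subseteq> {..<b^j}"
  proof
    fix k assume "k \<in> g ` {..<b^(j-2)}"
    then obtain t where t: "t < b^(j-2)" "k = g t" by auto
    have "Suc t \<le> b^(j-2)" using t by simp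
    then have "b^2 * Suc t \<le> b^2 * b^(j-2)" by (rule mult_left_mono) simp
    also have "\<dots> = b^j" using j by (metis power_add le_add_diff_inverse)
    finally have "b^2 * t + b^2 \<le> b^j" by simp
    moreover have "b^2 \<ge> 2^2" using b by (intro power_mono) auto
    ultimately show "k \<in> {..<b^j}" unfolding t(2) g_def by simp
  qed
  have fc: "c \<le> f (g t)" for t
  proof -
    define L where "L = lev b 0 j (g t)"
    have L: "j - 1 \<le> L" "L \<le> j" unfolding L_def g_def using lev_big[OF b j] lev_props(2)[OF b] by auto
    have B1: "real b > 1" using b by simp
    show ?thesis
    proof (cases "L = j")
      case True
      have "min 1 (real b powr \<beta>) * real b powr (- \<beta> * real j) \<le> 1 * real b powr (- \<beta> * real j)"
        by (intro mult_right_mono) auto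
      then show ?thesis unfolding f_def c_def L_def[symmetric] True by simp
    next
      case False
      then have "L = j - 1" using L by simp
      then have "real L = real j - 1" using j by simp
      then have "- \<beta> * real L = \<beta> + (- \<beta> * real j)" by (simp only:) (simp add: algebra_simps)
      then have "f (g t) = real b powr \<beta> * real b powr (- \<beta> * real j)"
        unfolding f_def L_def[symmetric] by (simp only: powr_add[symmetric])
      moreover have "min 1 (real b powr \<beta>) * real b powr (- \<beta> * real j) \<le> real b powr \<beta> * real b powr (- \<beta> * real j)"
        by (intro mult_right_mono) auto
      ultimately show ?thesis unfolding c_def by simp
    qed
  qed
  have "real (b ^ (j - 2)) * c = (\<Sum>t<b^(j-2). c)" by simp
  also have "\<dots> \<le> (\<Sum>t<b^(j-2). f (g t))" using fc by (intro sum_mono) auto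
  also have "\<dots> = (\<Sum>k\<in>g ` {..<b^(j-2)}. f k)"
    using inj by (simp add: sum.reindex inj_on_def inj_def)
  also have "\<dots> \<le> (\<Sum>k<b^j. f k)" unfolding f_def using sub by (intro sum_mono2) auto
  finally show ?thesis unfolding c_def f_def .
qed


lemma card_lev:
  assumes b: "b \<ge> 2" and I: "I \<le> j"
  shows "card {k \<in> {..<b^j}. lev b 0 j k = I} \<le> 3 * (b^I + 2)"
proof -
  define P where "P = int b ^ (j - I)"
  have P1: "P \<ge> 1" unfolding P_def using b by simp
  have bj: "int b ^ j = int b ^ I * P" unfolding P_def using I by (simp add: power_add[symmetric])
  define F where "F = (\<lambda>(z::int, e::int). nat (z * P + e))"
  define A where "A = {-1..int (b^I)} \<times> {-1, 0, 1::int}"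
  have sub: "{k \<in> {..<b^j}. lev b 0 j k = I} \<subseteq> F ` A"
  proof
    fix k assume k: "k \<in> {k \<in> {..<b^j}. lev b 0 j k = I}"
    then have Pk: "Pint b 0 j k I" using lev_props(1)[OF b, of 0 j k] by auto
    obtain z::int where z: "int k - 1 \<le> z * P" "z * P \<le> int k + 1"
      using Pint_int[OF b I Pk] unfolding P_def by blast
    have kb: "int k < int b ^ j" using k by (auto simp flip: of_nat_power)
    have zlo: "z \<ge> -1"
    proof (rule ccontr)
      assume "\<not> z \<ge> -1" then have "z \<le> -2" by simp
      then have "z * P \<le> -2 * P" using P1 by (intro mult_right_mono) auto
      then show False using z P1 by simp
    qed
    have zhi: "z \<le> int (b^I)"
    proof (rule ccontr)
      assume "\<not> z \<le> int (b^I)" then have "z \<ge> int b ^ I + 1" by simp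
      then have "z * P \<ge> (int b ^ I + 1) * P" using P1 by (intro mult_right_mono) auto
      then have "z * P \<ge> int b ^ j + P" unfolding bj by (simp add: algebra_simps)
      then show False using z P1 kb by simp
    qed
    define e where "e = int k - z * P"
    have e: "e \<in> {-1, 0, 1}" using z unfolding e_def by auto
    have "k = F (z, e)" unfolding F_def e_def by simp
    moreover have "(z, e) \<in> A" unfolding A_def using zlo zhi e by auto
    ultimately show "k \<in> F ` A" by blast
  qed
  have "card {k \<in> {..<b^j}. lev b 0 j k = I} \<le> card (F ` A)"
    by (rule card_mono[OF _ sub]) (simp add: A_def)
  also have "\<dots> \<le> card A" by (rule card_image_le) (simp add: A_def)
  also have "card A = nat (int (b^I) + 2) * 3" unfolding A_def by (simp add: card_cartesian_product)
  also have "\<dots> = 3 * (b^I + 2)"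
  proof -
    have "nat (int (b^I) + 2) = b^I + 2" by (metis nat_int of_nat_add of_nat_numeral)
    then show ?thesis by simp
  qed
  finally show ?thesis .
qed

lemma T_upper:
  assumes b: "b \<ge> 2"
  shows "(\<Sum>k<b^j. real b powr (- \<beta> * real (lev b 0 j k)))
     \<le> 9 * (real j + 1) * max 1 (real b powr ((1 - \<beta>) * real j))"
proof -
  define f where "f I = real b powr (- \<beta> * real I)" for I :: nat
  define M where "M = max 1 (real b powr ((1 - \<beta>) * real j))"
  have B1: "real b > 1" using b by simp
  have "(\<Sum>k<b^j. f (lev b 0 j k)) = (\<Sum>I\<in>{..j}. \<Sum>k\<in>{k \<in> {..<b^j}. lev b 0 j k = I}. f (lev b 0 j k))"
    using lev_props(2)[OF b] by (intro sum.group[symmetric]) auto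
  also have "\<dots> = (\<Sum>I\<in>{..j}. real (card {k \<in> {..<b^j}. lev b 0 j k = I}) * f I)"
    by (intro sum.cong refl) simp
  also have "\<dots> \<le> (\<Sum>I\<in>{..j}. 9 * M)"
  proof (intro sum_mono)
    fix I assume I: "I \<in> {..j}"
    have c: "real (card {k \<in> {..<b^j}. lev b 0 j k = I}) \<le> 3 * (real b ^ I + 2)"
      using card_lev[OF b, of I j] I by (auto simp flip: of_nat_power)
    have "real b ^ I \<ge> 1" using B1 by simp
    then have "3 * (real b ^ I + 2) \<le> 9 * real b ^ I" by simp
    then have c2: "real (card {k \<in> {..<b^j}. lev b 0 j k = I}) \<le> 9 * real b ^ I" using c by linarith
    have fp: "f I \<ge> 0" unfolding f_def by simp
    have bf: "real b ^ I * f I = real b powr ((1 - \<beta>) * real I)"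
      unfolding f_def using B1 by (simp add: powr_realpow[symmetric] powr_add[symmetric] algebra_simps)
    have bM: "real b powr ((1 - \<beta>) * real I) \<le> M"
    proof (cases "1 - \<beta> \<ge> 0")
      case True
      have "(1 - \<beta>) * real I \<le> (1 - \<beta>) * real j" using True I by (intro mult_left_mono) auto
      then have "real b powr ((1 - \<beta>) * real I) \<le> real b powr ((1 - \<beta>) * real j)"
        using B1 by (intro powr_mono) auto
      then show ?thesis unfolding M_def by linarith
    next
      case False
      then have "(1 - \<beta>) * real I \<le> 0" by (simp add: mult_nonpos_nonneg)
      then have "real b powr ((1 - \<beta>) * real I) \<le> real b powr 0" using B1 by (intro powr_mono) auto
      then show ?thesis unfolding M_def using B1 by simp
    qed
    have "real (card {k \<in> {..<b^j}. lev b 0 j k = I}) * f I \<le> 9 * real b ^ I * f I"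
      using c2 fp by (intro mult_right_mono) auto
    also have "\<dots> \<le> 9 * M" using bf bM by simp
    finally show "real (card {k \<in> {..<b^j}. lev b 0 j k = I}) * f I \<le> 9 * M" .
  qed
  also have "\<dots> = 9 * (real j + 1) * M" by simp
  finally show ?thesis unfolding f_def M_def .
qed


lemma ln_over: "((\<lambda>j. ln (real j + 1) / real j) \<longlongrightarrow> 0) sequentially"
  by real_asymp

lemma limit_from_bounds:
  fixes S :: "nat \<Rightarrow> real"
  assumes b: "b \<ge> 2" and c0: "c0 > 0" and C0: "C0 > 0"
    and bnd: "\<And>j. j \<ge> 2 \<Longrightarrow> c0 * real b powr (- \<gamma> * real j) \<le> S j \<and> S j \<le> C0 * (real j + 1) * real b powr (- \<gamma> * real j)"
  shows "((\<lambda>j. ln (S j) / ln (real b powr (- real j))) \<longlongrightarrow> \<gamma>) sequentially"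
proof -
  define lB where "lB = ln (real b)"
  have lB: "lB > 0" unfolding lB_def using b by simp
  define lo where "lo j = \<gamma> - (ln C0 / lB) * (1 / real j) - (1 / lB) * (ln (real j + 1) / real j)" for j
  define hi where "hi j = \<gamma> - (ln c0 / lB) * (1 / real j)" for j
  have "(lo \<longlongrightarrow> \<gamma> - (ln C0 / lB) * 0 - (1 / lB) * 0) sequentially"
    unfolding lo_def by (intro tendsto_intros ln_over)
  then have lo_lim: "(lo \<longlongrightarrow> \<gamma>) sequentially" by simp
  have "(hi \<longlongrightarrow> \<gamma> - (ln c0 / lB) * 0) sequentially"
    unfolding hi_def by (intro tendsto_intros)
  then have hi_lim: "(hi \<longlongrightarrow> \<gamma>) sequentially" by simp
  have main: "lo j \<le> ln (S j) / ln (real b powr (- real j)) \<and> ln (S j) / ln (real b powr (- real j)) \<le> hi j"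
    if j: "j \<ge> 2" for j
  proof -
    define D where "D = real j * lB"
    have D: "D > 0" unfolding D_def using lB j by simp
    have lnb: "ln (real b powr (- real j)) = - D" unfolding D_def lB_def by simp
    define E where "E = real b powr (- \<gamma> * real j)"
    have E: "E > 0" unfolding E_def using b by simp
    have lE: "ln E = - \<gamma> * D" unfolding E_def D_def lB_def by simp
    note bj = bnd[OF j, folded E_def]
    have Sp: "S j > 0" using bj c0 E by (smt (verit) mult_pos_pos)
    have l1: "ln c0 + ln E \<le> ln (S j)"
    proof -
      have "ln c0 + ln E = ln (c0 * E)" using c0 E by (simp add: ln_mult)
      also have "\<dots> \<le> ln (S j)" using bj c0 E by (intro ln_mono) auto
      finally show ?thesis .
    qed
    have l2: "ln (S j) \<le> ln C0 + ln (real j + 1) + ln E"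
    proof -
      have "ln (S j) \<le> ln (C0 * (real j + 1) * E)" using bj Sp by (intro ln_mono) auto
      also have "\<dots> = ln C0 + ln (real j + 1) + ln E" using C0 E by (simp add: ln_mult)
      finally show ?thesis .
    qed
    have r: "ln (S j) / ln (real b powr (- real j)) = - ln (S j) / D" unfolding lnb by simp
    have "hi j = (\<gamma> * D - ln c0) / D" unfolding hi_def D_def using lB j by (simp add: field_simps)
    moreover have "lo j = (\<gamma> * D - ln C0 - ln (real j + 1)) / D" unfolding lo_def D_def using lB j by (simp add: field_simps)
    moreover have "- ln (S j) \<le> \<gamma> * D - ln c0" using l1 lE by linarith
    moreover have "\<gamma> * D - ln C0 - ln (real j + 1) \<le> - ln (S j)" using l2 lE by linarith
    ultimately show ?thesis unfolding r using D
      by (metis divide_right_mono less_le)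
  qed
  show ?thesis
    by (rule tendsto_sandwich[OF _ _ lo_lim hi_lim]) (use main in \<open>auto simp: eventually_sequentially\<close>)
qed


lemma powr_neg_nat: "real b > 0 \<Longrightarrow> real b powr (- real j) = 1 / real b ^ j"
  by (simp add: powr_minus powr_realpow divide_inverse)

theorem mainTheorem4:
  fixes b :: nat and \<alpha>1 \<alpha>2 y r1 r2 :: real
  assumes "b \<ge> 2" and "\<alpha>1 > 0" and "\<alpha>2 > 0"
    and "0 \<le> y" and "y < 1"
    and "\<exists>m::nat. \<exists>k::nat. y = real k / real b ^ m"
  shows "scaling_fun b \<alpha>1 \<alpha>2 y r1 r2 =
           (if 1 - \<alpha>1 * r1 - \<alpha>2 * r2 \<ge> 0 then ereal (\<alpha>1 * r1 + \<alpha>2 * r2) else ereal 1)"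
proof -
  note b = assms(1) and a1 = assms(2) and a2 = assms(3)
  obtain m k0 where y: "y = real k0 / real b ^ m" using assms(6) by blast
  define B where "B = real b"
  have B1: "B > 1" using b unfolding B_def by simp
  define \<beta> where "\<beta> = \<alpha>1 * r1 + \<alpha>2 * r2"
  define \<gamma> where "\<gamma> = (if 1 - \<alpha>1 * r1 - \<alpha>2 * r2 \<ge> 0 then \<beta> else 1)"
  define tm where "tm j k = osc2 (levy b \<alpha>1) b j k powr r1 * osc2 (levy_shift b \<alpha>2 y) b j k powr r2" for j k
  obtain \<kappa> K where \<kappa>: "\<kappa> > 0" and tb: "\<And>j k. \<kappa> * B powr (- \<beta> * real (lev b 0 j k)) \<le> tm j k
       \<and> tm j k \<le> K * B powr (- \<beta> * real (lev b 0 j k))"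
    using term_bounds[OF b a1 a2 y, of r1 r2] unfolding B_def[symmetric] \<beta>_def[symmetric] tm_def by blast
  have K: "K > 0"
  proof -
    have "\<kappa> * B powr (- \<beta> * real (lev b 0 0 0)) \<le> K * B powr (- \<beta> * real (lev b 0 0 0))"
      using tb[of 0 0] by linarith
    then have "\<kappa> \<le> K" using B1 by simp
    then show ?thesis using \<kappa> by simp
  qed
  define T where "T j = (\<Sum>k<b^j. B powr (- \<beta> * real (lev b 0 j k)))" for j
  have T1: "1 \<le> T j" for j unfolding T_def B_def by (rule T_ge1[OF b])
  define S where "S j = structure_fun b \<alpha>1 \<alpha>2 y r1 r2 j" for j
  have Sdef: "S j = B powr (- real j) * (\<Sum>k<b^j. tm j k)" for j
    unfolding S_def structure_fun_def tm_def B_def ..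
  have Bj: "B powr (- real j) > 0" for j using B1 by simp
  have Slo: "B powr (- real j) * (\<kappa> * T j) \<le> S j" for j
  proof -
    have "\<kappa> * T j = (\<Sum>k<b^j. \<kappa> * B powr (- \<beta> * real (lev b 0 j k)))" unfolding T_def by (simp add: sum_distrib_left)
    also have "\<dots> \<le> (\<Sum>k<b^j. tm j k)" using tb by (intro sum_mono) blast
    finally show ?thesis unfolding Sdef using Bj by (intro mult_left_mono) (auto intro: less_imp_le)
  qed
  have Shi: "S j \<le> B powr (- real j) * (K * T j)" for j
  proof -
    have "(\<Sum>k<b^j. tm j k) \<le> (\<Sum>k<b^j. K * B powr (- \<beta> * real (lev b 0 j k)))" using tb by (intro sum_mono) blast
    also have "\<dots> = K * T j" unfolding T_def by (simp add: sum_distrib_left)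
    finally show ?thesis unfolding Sdef using Bj by (intro mult_left_mono) (auto intro: less_imp_le)
  qed
  define \<mu> where "\<mu> = min 1 (B powr \<beta>)"
  have \<mu>: "\<mu> > 0" unfolding \<mu>_def using B1 by simp
  define c0 where "c0 = \<kappa> * min 1 (\<mu> / B^2)"
  define C0 where "C0 = 9 * K"
  have c0: "c0 > 0" unfolding c0_def using \<kappa> \<mu> B1 by simp
  have C0: "C0 > 0" unfolding C0_def using K by simp
  have bnd: "c0 * B powr (- \<gamma> * real j) \<le> S j \<and> S j \<le> C0 * (real j + 1) * B powr (- \<gamma> * real j)"
    if j: "j \<ge> 2" for j
  proof
    show "c0 * B powr (- \<gamma> * real j) \<le> S j"
    proof (cases "1 - \<alpha>1 * r1 - \<alpha>2 * r2 \<ge> 0")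
      case True
      then have g: "\<gamma> = \<beta>" unfolding \<gamma>_def by simp
      have TL: "real (b ^ (j - 2)) * (\<mu> * B powr (- \<beta> * real j)) \<le> T j"
        unfolding T_def \<mu>_def B_def by (rule T_lower[OF b j])
      have e: "B powr (- real j) * real (b ^ (j - 2)) = 1 / B^2"
      proof -
        have "B ^ j = B^2 * B^(j-2)" using j by (metis power_add le_add_diff_inverse)
        then show ?thesis using B1 unfolding B_def by (simp add: powr_neg_nat)
      qed
      have "c0 * B powr (- \<gamma> * real j) \<le> \<kappa> * (\<mu> / B^2) * B powr (- \<beta> * real j)"
        unfolding c0_def g using \<kappa> by (intro mult_right_mono mult_left_mono) auto
      also have "\<dots> = \<kappa> * \<mu> * B powr (- \<beta> * real j) * (B powr (- real j) * real (b ^ (j - 2)))"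
        unfolding e by simp
      also have "\<dots> = B powr (- real j) * (\<kappa> * (real (b ^ (j - 2)) * (\<mu> * B powr (- \<beta> * real j))))"
        by (simp only: mult_ac)
      also have "\<dots> \<le> B powr (- real j) * (\<kappa> * T j)"
        using TL \<kappa> Bj by (intro mult_left_mono) (auto intro: less_imp_le)
      also have "\<dots> \<le> S j" by (rule Slo)
      finally show ?thesis .
    next
      case False
      then have g: "\<gamma> = 1" unfolding \<gamma>_def by simp
      have "c0 * B powr (- \<gamma> * real j) \<le> (\<kappa> * 1) * B powr (- real j)"
        unfolding c0_def g mult_minus1 using \<kappa> by (intro mult_right_mono mult_left_mono) auto
      also have "\<dots> = \<kappa> * B powr (- real j)" by simp
      also have "\<dots> \<le> B powr (- real j) * (\<kappa> * T j)"
        using T1[of j] \<kappa> Bj by (simp add: mult_left_mono less_imp_le)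
      also have "\<dots> \<le> S j" by (rule Slo)
      finally show ?thesis .
    qed
    have TU: "T j \<le> 9 * (real j + 1) * max 1 (B powr ((1 - \<beta>) * real j))"
      unfolding T_def B_def by (rule T_upper[OF b])
    have idm: "B powr (- real j) * max 1 (B powr ((1 - \<beta>) * real j)) = B powr (- \<gamma> * real j)"
    proof (cases "1 - \<alpha>1 * r1 - \<alpha>2 * r2 \<ge> 0")
      case True
      then have g: "\<gamma> = \<beta>" and bb: "1 - \<beta> \<ge> 0" unfolding \<gamma>_def \<beta>_def by auto
      have "B powr 0 \<le> B powr ((1 - \<beta>) * real j)" using B1 bb by (intro powr_mono) auto
      then have "max 1 (B powr ((1 - \<beta>) * real j)) = B powr ((1 - \<beta>) * real j)" using B1 by simp
      then show ?thesis unfolding g by (simp add: powr_add[symmetric] algebra_simps)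
    next
      case False
      then have g: "\<gamma> = 1" and bb: "1 - \<beta> < 0" unfolding \<gamma>_def \<beta>_def by auto
      have "(1 - \<beta>) * real j \<le> 0" using bb by (simp add: mult_nonpos_nonneg)
      then have "B powr ((1 - \<beta>) * real j) \<le> B powr 0" using B1 by (intro powr_mono) auto
      then have "max 1 (B powr ((1 - \<beta>) * real j)) = 1" using B1 by simp
      then show ?thesis unfolding g by simp
    qed
    have "S j \<le> B powr (- real j) * (K * T j)" by (rule Shi)
    also have "\<dots> \<le> B powr (- real j) * (K * (9 * (real j + 1) * max 1 (B powr ((1 - \<beta>) * real j))))"
      using TU K Bj by (intro mult_left_mono) (auto intro: less_imp_le)
    also have "\<dots> = C0 * (real j + 1) * (B powr (- real j) * max 1 (B powr ((1 - \<beta>) * real j)))"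
      unfolding C0_def by (simp add: algebra_simps)
    also have "\<dots> = C0 * (real j + 1) * B powr (- \<gamma> * real j)" unfolding idm ..
    finally show "S j \<le> C0 * (real j + 1) * B powr (- \<gamma> * real j)" .
  qed
  have lim: "((\<lambda>j. ln (S j) / ln (real b powr (- real j))) \<longlongrightarrow> \<gamma>) sequentially"
    by (rule limit_from_bounds[OF b c0 C0]) (use bnd in \<open>simp add: B_def\<close>)
  have "scaling_fun b \<alpha>1 \<alpha>2 y r1 r2 = liminf (\<lambda>j. ereal (ln (S j) / ln (real b powr (- real j))))"
    unfolding scaling_fun_def S_def ..
  also have "\<dots> = ereal \<gamma>"
    by (rule lim_imp_Liminf[OF trivial_limit_sequentially]) (rule tendsto_ereal[OF lim])
  finally show ?thesis unfolding \<gamma>_def \<beta>_def by simp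
qed

end
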